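(* Let $G=(V,E)$ be a finite graph (parallel edges and loops allowed), $e\neq f$ edges, and let $\lambda=(\lambda_g)_{g\in E\setminus\{e,f\}}$ with $\lambda_g\in\{0,1,2\}$. Say that equality holds for $(G,\lambda)$ if the coefficient of $\mathbf{x}^\lambda=\prod_g x_g^{\lambda_g}$ in $\mathcal{M}_{ef}(1)$ equals its coefficient in $R_G:=\sum_{\beta,\gamma}\mathbf{x}^{\beta}\mathbf{x}^{\gamma}\sum_{\mathbf{m}\in B_{\beta,\gamma}}\mathbf{m}$. Let $g\in E\setminus\{e,f\}$. (i) If $\lambda_g=0$ and equality holds for $G\setminus g$ (deletion) with the exponent vector $\lambda$ restricted to the remaining edges, then equality holds for $(G,\lambda)$. (ii) If $\lambda_g=2$ and equality holds for $G/g$ (contraction) with the exponent vector obtained from $\lambda$ by setting $\lambda_g=0$ (i.e. dropping $g$), then equality holds for $(G,\lambda)$.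
   Context: Let $\{x_h : h\in E\}$ be variables. For $F\subseteq E$, $\mathbf{x}^F=\prod_{h\in F}x_h$ and $k(F)$ is the number of connected components of $(V,F)$. For $A,B\subseteq E$, $\mathcal{T}_A^B=\sum_{F\subseteq E:\,A\subseteq F,\,F\cap B=\varnothing}\mathbf{x}^F q^{k(F)}$; $\mathcal{T}_e^f=\mathcal{T}_{\{e\}}^{\{f\}}$, $\mathcal{T}_f^e=\mathcal{T}_{\{f\}}^{\{e\}}$, $\mathcal{T}_{ef}=\mathcal{T}_{\{e,f\}}^{\varnothing}$, $\mathcal{T}^{ef}=\mathcal{T}_{\varnothing}^{\{e,f\}}$, $\mathcal{M}_{ef}(q)=(\mathcal{T}_e^f\mathcal{T}_f^e-\mathcal{T}_{ef}\mathcal{T}^{ef})/(x_ex_f(1-q))$ (a polynomial), evaluated at $q=1$. Let $E^{ef}=E\setminus\{e,f\}$. $F\subseteq E^{ef}$ is a paracel if $k(F+e)=k(F+f)=k(F)-1$ and $(V,F+e)$, $(V,F+f)$ have the same connected components; an edge of $E^{ef}\setminus F$ is a smoot for paracel $F$ if it joins the same two components of $(V,F)$ as $e$ and $f$. For disjoint $\beta,\gamma\subseteq E^{ef}$, $A_{\beta,\gamma}$ is the set of $\alpha\subseteq E^{ef}$ disjoint from $\beta,\gamma$ with $\gamma\cup\alpha$ a paracel and every edge of $\beta$ a smoot for $\gamma\cup\alpha$; $\alpha,\alpha'\in A_{\beta,\gamma}$ are twins if $\alpha\cap\alpha'\in A_{\beta,\gamma}$; $B_{\beta,\gamma}$ is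 the set of distinct monomials $\mathbf{x}^{\alpha}\mathbf{x}^{\alpha'}$ with $\alpha,\alpha'$ twins. The sum in $R_G$ is over ordered pairs of disjoint subsets $\beta,\gamma$ of $E^{ef}$. All these objects are defined the same way for $G\setminus g$ and $G/g$ (which keep the edges $e,f$). *)

theory Defs
  imports Main "HOL-Library.Poly_Mapping" "HOL-Computational_Algebra.Polynomial"
begin

text \<open>A finite multigraph (parallel edges and loops allowed) is given by a vertex set V,
  a set E of edge names and an endpoint map ends :: edge => vertex * vertex.\<close>

definition wf_graph :: "'v set \<Rightarrow> 'e set \<Rightarrow> ('e \<Rightarrow> 'v \<times> 'v) \<Rightarrow> bool" where
  "wf_graph V E ends \<longleftrightarrow> finite V \<and> finite E \<and>
     (\<forall>h\<in>E. fst (ends h) \<in> V \<and> snd (ends h) \<in> V)"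

definition adj :: "('e \<Rightarrow> 'v \<times> 'v) \<Rightarrow> 'e set \<Rightarrow> ('v \<times> 'v) set" where
  "adj ends F = {(a, b). \<exists>h\<in>F. ends h = (a, b) \<or> ends h = (b, a)}"

definition comps :: "'v set \<Rightarrow> ('e \<Rightarrow> 'v \<times> 'v) \<Rightarrow> 'e set \<Rightarrow> 'v set set" where
  "comps V ends F = V // ((adj ends F)\<^sup>*)"

definition ncomp :: "'v set \<Rightarrow> ('e \<Rightarrow> 'v \<times> 'v) \<Rightarrow> 'e set \<Rightarrow> nat" where
  "ncomp V ends F = card (comps V ends F)"

definition comp_of :: "('e \<Rightarrow> 'v \<times> 'v) \<Rightarrow> 'e set \<Rightarrow> 'v \<Rightarrow> 'v set" where
  "comp_of ends F u = ((adj ends F)\<^sup>*) `` {u}"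

definition expo :: "'e set \<Rightarrow> 'e \<Rightarrow>\<^sub>0 nat" where
  "expo F = (\<Sum>h\<in>F. Poly_Mapping.single h 1)"

text \<open>Polynomials in the variables x_h (h an edge) with coefficients in Z[q]:
  the type ('e =>0 nat) =>0 int poly. T_A^B:\<close>
definition Tpoly :: "'v set \<Rightarrow> 'e set \<Rightarrow> ('e \<Rightarrow> 'v \<times> 'v) \<Rightarrow> 'e set \<Rightarrow> 'e set
    \<Rightarrow> ('e \<Rightarrow>\<^sub>0 nat) \<Rightarrow>\<^sub>0 int poly" where
  "Tpoly V E ends A B =
     (\<Sum>F\<in>{F. F \<subseteq> E \<and> A \<subseteq> F \<and> F \<inter> B = {}}.
        Poly_Mapping.single (expo F) (monom 1 (ncomp V ends F)))"

definition Mnum :: "'v set \<Rightarrow> 'e set \<Rightarrow> ('e \<Rightarrow> 'v \<times> 'v) \<Rightarrow> 'e \<Rightarrow> 'e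
    \<Rightarrow> ('e \<Rightarrow>\<^sub>0 nat) \<Rightarrow>\<^sub>0 int poly" where
  "Mnum V E ends e f =
     Tpoly V E ends {e} {f} * Tpoly V E ends {f} {e}
     - Tpoly V E ends {e, f} {} * Tpoly V E ends {} {e, f}"

text \<open>Coefficient of x^lam in M_ef(1) = (numerator/(x_e x_f (1-q)))|_{q=1}:
  the coefficient of x^lam x_e x_f in the numerator is a polynomial in q, which
  (as asserted in the paper) is divisible by 1-q; divide and evaluate at q = 1.\<close>
definition coeff_M1 :: "'v set \<Rightarrow> 'e set \<Rightarrow> ('e \<Rightarrow> 'v \<times> 'v) \<Rightarrow> 'e \<Rightarrow> 'e
    \<Rightarrow> ('e \<Rightarrow>\<^sub>0 nat) \<Rightarrow> int" where
  "coeff_M1 V E ends e f lam =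
     poly (Poly_Mapping.lookup (Mnum V E ends e f)
             (lam + Poly_Mapping.single e 1 + Poly_Mapping.single f 1) div [:1, -1:]) 1"

definition Eef :: "'e set \<Rightarrow> 'e \<Rightarrow> 'e \<Rightarrow> 'e set" where
  "Eef E e f = E - {e, f}"

definition paracel :: "'v set \<Rightarrow> 'e set \<Rightarrow> ('e \<Rightarrow> 'v \<times> 'v) \<Rightarrow> 'e \<Rightarrow> 'e \<Rightarrow> 'e set \<Rightarrow> bool" where
  "paracel V E ends e f F \<longleftrightarrow> F \<subseteq> Eef E e f \<and>
     int (ncomp V ends (insert e F)) = int (ncomp V ends F) - 1 \<and>
     int (ncomp V ends (insert f F)) = int (ncomp V ends F) - 1 \<and>
     comps V ends (insert e F) = comps V ends (insert f F)"

definition smoot :: "'v set \<Rightarrow> 'e set \<Rightarrow> ('e \<Rightarrow> 'v \<times> 'v) \<Rightarrow> 'e \<Rightarrow> 'e \<Rightarrow> 'e set \<Rightarrow> 'e \<Rightarrow> bool" where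
  "smoot V E ends e f F h \<longleftrightarrow> h \<in> Eef E e f - F \<and>
     {comp_of ends F (fst (ends h)), comp_of ends F (snd (ends h))}
       = {comp_of ends F (fst (ends e)), comp_of ends F (snd (ends e))} \<and>
     {comp_of ends F (fst (ends h)), comp_of ends F (snd (ends h))}
       = {comp_of ends F (fst (ends f)), comp_of ends F (snd (ends f))}"

definition Aset :: "'v set \<Rightarrow> 'e set \<Rightarrow> ('e \<Rightarrow> 'v \<times> 'v) \<Rightarrow> 'e \<Rightarrow> 'e \<Rightarrow> 'e set \<Rightarrow> 'e set
    \<Rightarrow> 'e set set" where
  "Aset V E ends e f \<beta> \<gamma> = {\<alpha>. \<alpha> \<subseteq> Eef E e f \<and> \<alpha> \<inter> \<beta> = {} \<and> \<alpha> \<inter> \<gamma> = {} \<and>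
       paracel V E ends e f (\<gamma> \<union> \<alpha>) \<and> (\<forall>h\<in>\<beta>. smoot V E ends e f (\<gamma> \<union> \<alpha>) h)}"

text \<open>B_{beta,gamma}: the set of distinct monomials x^alpha x^alpha' (as exponent vectors)
  with alpha, alpha' twins.\<close>
definition Bset :: "'v set \<Rightarrow> 'e set \<Rightarrow> ('e \<Rightarrow> 'v \<times> 'v) \<Rightarrow> 'e \<Rightarrow> 'e \<Rightarrow> 'e set \<Rightarrow> 'e set
    \<Rightarrow> ('e \<Rightarrow>\<^sub>0 nat) set" where
  "Bset V E ends e f \<beta> \<gamma> = {expo \<alpha> + expo \<alpha>' | \<alpha> \<alpha>'.
       \<alpha> \<in> Aset V E ends e f \<beta> \<gamma> \<and> \<alpha>' \<in> Aset V E ends e f \<beta> \<gamma> \<and>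
       \<alpha> \<inter> \<alpha>' \<in> Aset V E ends e f \<beta> \<gamma>}"

definition Rpoly :: "'v set \<Rightarrow> 'e set \<Rightarrow> ('e \<Rightarrow> 'v \<times> 'v) \<Rightarrow> 'e \<Rightarrow> 'e
    \<Rightarrow> ('e \<Rightarrow>\<^sub>0 nat) \<Rightarrow>\<^sub>0 int" where
  "Rpoly V E ends e f =
     (\<Sum>(\<beta>, \<gamma>)\<in>{(\<beta>, \<gamma>). \<beta> \<subseteq> Eef E e f \<and> \<gamma> \<subseteq> Eef E e f \<and> \<beta> \<inter> \<gamma> = {}}.
        Poly_Mapping.single (expo \<beta>) 1 * Poly_Mapping.single (expo \<gamma>) 1 *
        (\<Sum>m\<in>Bset V E ends e f \<beta> \<gamma>. Poly_Mapping.single m 1))"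

definition eq_holds :: "'v set \<Rightarrow> 'e set \<Rightarrow> ('e \<Rightarrow> 'v \<times> 'v) \<Rightarrow> 'e \<Rightarrow> 'e
    \<Rightarrow> ('e \<Rightarrow>\<^sub>0 nat) \<Rightarrow> bool" where
  "eq_holds V E ends e f lam \<longleftrightarrow> coeff_M1 V E ends e f lam = Poly_Mapping.lookup (Rpoly V E ends e f) lam"

definition del_edges :: "'e set \<Rightarrow> 'e \<Rightarrow> 'e set" where
  "del_edges E g = E - {g}"

text \<open>Contraction G / g: the endpoint snd (ends g) is identified with fst (ends g)
  (nothing happens to the vertices if g is a loop), and g is removed.\<close>
definition contr_map :: "('e \<Rightarrow> 'v \<times> 'v) \<Rightarrow> 'e \<Rightarrow> 'v \<Rightarrow> 'v" where
  "contr_map ends g w = (if w = snd (ends g) then fst (ends g) else w)"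

definition contr_V :: "'v set \<Rightarrow> ('e \<Rightarrow> 'v \<times> 'v) \<Rightarrow> 'e \<Rightarrow> 'v set" where
  "contr_V V ends g = contr_map ends g ` V"

definition contr_ends :: "('e \<Rightarrow> 'v \<times> 'v) \<Rightarrow> 'e \<Rightarrow> 'e \<Rightarrow> 'v \<times> 'v" where
  "contr_ends ends g h = (contr_map ends g (fst (ends h)), contr_map ends g (snd (ends h)))"

end

theory Submission
  imports Defs
begin


lemma sym_adj: "sym (adj ends F)"
  unfolding adj_def sym_def by auto

lemma sym_R: "sym ((adj ends F)\<^sup>*)"
  by (simp add: sym_adj sym_rtrancl)

lemma R_sym: "(x,y) \<in> (adj ends F)\<^sup>* \<Longrightarrow> (y,x) \<in> (adj ends F)\<^sup>*"
  using sym_R by (metis symD)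

lemma edge_R: "h \<in> F \<Longrightarrow> (fst (ends h), snd (ends h)) \<in> (adj ends F)\<^sup>*"
  unfolding adj_def by (rule r_into_rtrancl) (auto intro: bexI[of _ h])

lemma base_R:
  assumes "g \<in> F" "contr_map ends g p = contr_map ends g q"
  shows "(p,q) \<in> (adj ends F)\<^sup>*"
proof -
  have "p = q \<or> (p = fst (ends g) \<and> q = snd (ends g)) \<or> (q = fst (ends g) \<and> p = snd (ends g))"
    using assms(2) unfolding contr_map_def by (auto split: if_splits)
  then show ?thesis using edge_R[OF assms(1), where ends=ends] R_sym[OF edge_R[OF assms(1), where ends=ends]] by auto
qed

lemma fwd_R:
  assumes "g \<in> F" "(x,y) \<in> (adj ends F)\<^sup>*"
  shows "(contr_map ends g x, contr_map ends g y) \<in> (adj (contr_ends ends g) (F - {g}))\<^sup>*"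
  using assms(2)
proof (induction rule: rtrancl_induct)
  case base then show ?case by simp
next
  case (step y z)
  from step(2) obtain h where h: "h \<in> F" "ends h = (y,z) \<or> ends h = (z,y)"
    unfolding adj_def by auto
  have "(contr_map ends g y, contr_map ends g z) \<in> (adj (contr_ends ends g) (F - {g}))\<^sup>*"
  proof (cases "h = g")
    case True
    then have "contr_map ends g y = contr_map ends g z"
      using h unfolding contr_map_def by (cases "ends g") auto
    then show ?thesis by simp
  next
    case False
    then have "(contr_map ends g y, contr_map ends g z) \<in> adj (contr_ends ends g) (F - {g})"
      using h unfolding adj_def contr_ends_def by (auto intro!: bexI[of _ h])
    then show ?thesis by blast
  qed
  then show ?case using step(3) by (meson rtrancl_trans)
qed

lemma bwd_R:
  assumes "g \<in> F" "(a,b) \<in> (adj (contr_ends ends g) (F - {g}))\<^sup>*"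
  shows "\<And>p q. contr_map ends g p = a \<Longrightarrow> contr_map ends g q = b \<Longrightarrow> (p,q) \<in> (adj ends F)\<^sup>*"
  using assms(2)
proof (induction rule: rtrancl_induct)
  case base then show ?case using base_R[OF assms(1), where ends=ends and p=p and q=q] by simp
next
  case (step b b')
  from step(2) obtain h where h: "h \<in> F" "h \<noteq> g"
    "contr_ends ends g h = (b,b') \<or> contr_ends ends g h = (b',b)"
    unfolding adj_def by auto
  show ?case
  proof (cases "contr_ends ends g h = (b,b')")
    case True
    then have 1: "contr_map ends g (fst (ends h)) = b" "contr_map ends g (snd (ends h)) = b'"
      unfolding contr_ends_def by auto
    have "(p, fst (ends h)) \<in> (adj ends F)\<^sup>*" using step(3)[OF step(4) 1(1)] .
    moreover have "(fst (ends h), snd (ends h)) \<in> (adj ends F)\<^sup>*" using edge_R[OF h(1)] .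
    moreover have "(snd (ends h), q) \<in> (adj ends F)\<^sup>*" by (rule base_R[OF assms(1)]) (simp add: 1(2) step(5))
    ultimately show ?thesis by (meson rtrancl_trans)
  next
    case False
    then have 1: "contr_map ends g (snd (ends h)) = b" "contr_map ends g (fst (ends h)) = b'"
      using h(3) unfolding contr_ends_def by auto
    have "(p, snd (ends h)) \<in> (adj ends F)\<^sup>*" using step(3)[OF step(4) 1(1)] .
    moreover have "(snd (ends h), fst (ends h)) \<in> (adj ends F)\<^sup>*" by (rule R_sym[OF edge_R[OF h(1)]])
    moreover have "(fst (ends h), q) \<in> (adj ends F)\<^sup>*" by (rule base_R[OF assms(1)]) (simp add: 1(2) step(5))
    ultimately show ?thesis by (meson rtrancl_trans)
  qed
qed

lemma range_R:
  assumes "(a,z) \<in> (adj (contr_ends ends g) F')\<^sup>*" "a \<in> range (contr_map ends g)"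
  shows "z \<in> range (contr_map ends g)"
  using assms(1)
proof (induction rule: rtrancl_induct)
  case base then show ?case using assms(2) .
next
  case (step y z)
  then obtain h where "contr_ends ends g h = (y,z) \<or> contr_ends ends g h = (z,y)"
    unfolding adj_def by auto
  then have "z = contr_map ends g (snd (ends h)) \<or> z = contr_map ends g (fst (ends h))"
    unfolding contr_ends_def by auto
  then show ?case by blast
qed

lemma iff_R:
  assumes "g \<in> F"
  shows "(contr_map ends g x, contr_map ends g y) \<in> (adj (contr_ends ends g) (F - {g}))\<^sup>*
     \<longleftrightarrow> (x,y) \<in> (adj ends F)\<^sup>*"
proof
  assume "(contr_map ends g x, contr_map ends g y) \<in> (adj (contr_ends ends g) (F - {g}))\<^sup>*"
  then show "(x,y) \<in> (adj ends F)\<^sup>*" by (rule bwd_R[OF assms _ refl refl])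
next
  assume "(x,y) \<in> (adj ends F)\<^sup>*"
  then show "(contr_map ends g x, contr_map ends g y) \<in> (adj (contr_ends ends g) (F - {g}))\<^sup>*"
    by (rule fwd_R[OF assms])
qed

lemma class_R:
  assumes "g \<in> F"
  shows "(adj (contr_ends ends g) (F - {g}))\<^sup>* `` {contr_map ends g x}
       = contr_map ends g ` ((adj ends F)\<^sup>* `` {x})"
proof
  show "(adj (contr_ends ends g) (F - {g}))\<^sup>* `` {contr_map ends g x}
       \<subseteq> contr_map ends g ` ((adj ends F)\<^sup>* `` {x})"
  proof
    fix z assume "z \<in> (adj (contr_ends ends g) (F - {g}))\<^sup>* `` {contr_map ends g x}"
    then have z: "(contr_map ends g x, z) \<in> (adj (contr_ends ends g) (F - {g}))\<^sup>*" by simp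
    then obtain y where y: "z = contr_map ends g y" using range_R[OF z] by blast
    then have "(x,y) \<in> (adj ends F)\<^sup>*" using z iff_R[OF assms, where ends=ends and x=x and y=y] by simp
    then show "z \<in> contr_map ends g ` ((adj ends F)\<^sup>* `` {x})" using y by blast
  qed
next
  show "contr_map ends g ` ((adj ends F)\<^sup>* `` {x})
      \<subseteq> (adj (contr_ends ends g) (F - {g}))\<^sup>* `` {contr_map ends g x}"
  proof
    fix z assume "z \<in> contr_map ends g ` ((adj ends F)\<^sup>* `` {x})"
    then obtain y where "z = contr_map ends g y" "(x,y) \<in> (adj ends F)\<^sup>*" by auto
    then show "z \<in> (adj (contr_ends ends g) (F - {g}))\<^sup>* `` {contr_map ends g x}"
      using fwd_R[OF assms, where ends=ends and x=x and y=y] by simp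
  qed
qed

definition sat :: "('v \<Rightarrow> 'v) \<Rightarrow> 'v set \<Rightarrow> bool" where
  "sat c A \<longleftrightarrow> (\<forall>x y. c x = c y \<longrightarrow> (x \<in> A \<longleftrightarrow> y \<in> A))"

lemma sat_mem: "sat c A \<Longrightarrow> c x \<in> c ` A \<Longrightarrow> x \<in> A"
proof -
  assume s: "sat c A" and m: "c x \<in> c ` A"
  then obtain y where y: "y \<in> A" "c x = c y" by blast
  then show "x \<in> A" using s unfolding sat_def by blast
qed

lemma inj_sat: "inj_on (image c) {A. sat c A}"
proof (rule inj_onI)
  fix A B assume A: "A \<in> {A. sat c A}" and B: "B \<in> {A. sat c A}" and eq: "c ` A = c ` B"
  show "A = B"
  proof (intro set_eqI iffI)
    fix x assume "x \<in> A" then have "c x \<in> c ` B" using eq by blast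
    then show "x \<in> B" using B by (intro sat_mem[of c B x]) auto
  next
    fix x assume "x \<in> B" then have "c x \<in> c ` A" using eq by blast
    then show "x \<in> A" using A by (intro sat_mem[of c A x]) auto
  qed
qed

lemma sat_class:
  assumes "g \<in> F"
  shows "sat (contr_map ends g) ((adj ends F)\<^sup>* `` {x})"
  unfolding sat_def
proof (intro allI impI)
  fix y z assume "contr_map ends g y = contr_map ends g z"
  then have yz: "(y,z) \<in> (adj ends F)\<^sup>*" "(z,y) \<in> (adj ends F)\<^sup>*"
    using base_R[OF assms, where ends=ends and p=y and q=z] base_R[OF assms, where ends=ends and p=z and q=y] by auto
  show "(y \<in> (adj ends F)\<^sup>* `` {x}) = (z \<in> (adj ends F)\<^sup>* `` {x})"
    using rtrancl_trans[OF _ yz(1), of x] rtrancl_trans[OF _ yz(2), of x] by auto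
qed

lemma comps_contr:
  assumes "g \<in> F"
  shows "comps (contr_V V ends g) (contr_ends ends g) (F - {g}) = image (contr_map ends g) ` comps V ends F"
proof -
  have "comps (contr_V V ends g) (contr_ends ends g) (F - {g})
     = (\<lambda>x. (adj (contr_ends ends g) (F - {g}))\<^sup>* `` {contr_map ends g x}) ` V"
    unfolding comps_def contr_V_def quotient_def by auto
  also have "\<dots> = (\<lambda>x. contr_map ends g ` ((adj ends F)\<^sup>* `` {x})) ` V"
    by (rule image_cong[OF refl]) (rule class_R[OF assms])
  also have "\<dots> = image (contr_map ends g) ` comps V ends F"
    unfolding comps_def quotient_def by auto
  finally show ?thesis .
qed

lemma comps_sat:
  assumes "g \<in> F"
  shows "comps V ends F \<subseteq> {A. sat (contr_map ends g) A}"
  unfolding comps_def quotient_def using sat_class[OF assms] by auto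

lemma ncomp_contr:
  assumes "g \<in> F"
  shows "ncomp (contr_V V ends g) (contr_ends ends g) (F - {g}) = ncomp V ends F"
  unfolding ncomp_def comps_contr[OF assms]
  by (rule card_image) (meson comps_sat[OF assms] inj_on_subset inj_sat)

lemma comp_of_contr:
  assumes "g \<in> F"
  shows "comp_of (contr_ends ends g) (F - {g}) (contr_map ends g x) = contr_map ends g ` comp_of ends F x"
  unfolding comp_of_def using class_R[OF assms] .

lemma comp_of_sat:
  assumes "g \<in> F"
  shows "sat (contr_map ends g) (comp_of ends F x)"
  unfolding comp_of_def using sat_class[OF assms] .



lemma ncomp_ins:
  assumes "g \<notin> X"
  shows "ncomp (contr_V V ends g) (contr_ends ends g) X = ncomp V ends (insert g X)"
proof -
  have "insert g X - {g} = X" using assms by auto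
  then show ?thesis using ncomp_contr[where g=g and F="insert g X" and V=V and ends=ends] by simp
qed

lemma comps_ins:
  assumes "g \<notin> X"
  shows "comps (contr_V V ends g) (contr_ends ends g) X = image (contr_map ends g) ` comps V ends (insert g X)"
proof -
  have "insert g X - {g} = X" using assms by auto
  then show ?thesis using comps_contr[where g=g and F="insert g X" and V=V and ends=ends] by simp
qed

lemma comp_of_ins:
  assumes "g \<notin> X"
  shows "comp_of (contr_ends ends g) X (contr_map ends g x) = contr_map ends g ` comp_of ends (insert g X) x"
proof -
  have "insert g X - {g} = X" using assms by auto
  then show ?thesis using comp_of_contr[where g=g and F="insert g X" and x=x and ends=ends] by simp
qed

lemma img_eq_iff_sat:
  assumes "A \<subseteq> {S. sat c S}" "B \<subseteq> {S. sat c S}"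
  shows "(image c ` A = image c ` B) \<longleftrightarrow> A = B"
  using inj_on_image_eq_iff[OF inj_sat assms] .

lemma paracel_contr:
  assumes g: "g \<in> Eef E e f" and gF: "g \<notin> F"
  shows "paracel V E ends e f (insert g F) \<longleftrightarrow>
         paracel (contr_V V ends g) (E - {g}) (contr_ends ends g) e f F"
proof -
  have ef: "e \<noteq> g" "f \<noteq> g" using g by (auto simp: Eef_def)
  have s: "insert g F \<subseteq> Eef E e f \<longleftrightarrow> F \<subseteq> Eef (E - {g}) e f" using g gF by (auto simp: Eef_def)
  have gE: "g \<notin> insert e F" "g \<notin> insert f F" using ef gF by auto
  have n0: "ncomp (contr_V V ends g) (contr_ends ends g) F = ncomp V ends (insert g F)"
    by (rule ncomp_ins[OF gF])
  have ne: "ncomp (contr_V V ends g) (contr_ends ends g) (insert e F) = ncomp V ends (insert e (insert g F))"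
    using ncomp_ins[OF gE(1), where V=V and ends=ends] by (simp add: insert_commute)
  have nf: "ncomp (contr_V V ends g) (contr_ends ends g) (insert f F) = ncomp V ends (insert f (insert g F))"
    using ncomp_ins[OF gE(2), where V=V and ends=ends] by (simp add: insert_commute)
  have ce: "comps (contr_V V ends g) (contr_ends ends g) (insert e F) = image (contr_map ends g) ` comps V ends (insert e (insert g F))"
    using comps_ins[OF gE(1), where V=V and ends=ends] by (simp add: insert_commute)
  have cf: "comps (contr_V V ends g) (contr_ends ends g) (insert f F) = image (contr_map ends g) ` comps V ends (insert f (insert g F))"
    using comps_ins[OF gE(2), where V=V and ends=ends] by (simp add: insert_commute)
  have se: "comps V ends (insert e (insert g F)) \<subseteq> {S. sat (contr_map ends g) S}"
    by (rule comps_sat) simp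
  have sf: "comps V ends (insert f (insert g F)) \<subseteq> {S. sat (contr_map ends g) S}"
    by (rule comps_sat) simp
  have c: "(comps (contr_V V ends g) (contr_ends ends g) (insert e F) = comps (contr_V V ends g) (contr_ends ends g) (insert f F))
     \<longleftrightarrow> comps V ends (insert e (insert g F)) = comps V ends (insert f (insert g F))"
    unfolding ce cf by (rule img_eq_iff_sat[OF se sf])
  show ?thesis unfolding paracel_def using s n0 ne nf c by simp
qed

lemma pair_img: "{image c X, image c Y} = image c ` {X, Y}" by simp

lemma smoot_contr:
  assumes gF: "g \<notin> F" and hg: "h \<noteq> g" and ef: "e \<noteq> g" "f \<noteq> g"
  shows "smoot V E ends e f (insert g F) h \<longleftrightarrow>
         smoot (contr_V V ends g) (E - {g}) (contr_ends ends g) e f F h"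
proof -
  define Q where "Q x = comp_of ends (insert g F) x" for x
  define c where "c = contr_map ends g"
  have cq: "comp_of (contr_ends ends g) F (fst (contr_ends ends g k)) = image c (Q (fst (ends k)))
          \<and> comp_of (contr_ends ends g) F (snd (contr_ends ends g k)) = image c (Q (snd (ends k)))" for k
  proof -
    have "fst (contr_ends ends g k) = contr_map ends g (fst (ends k))"
         "snd (contr_ends ends g k) = contr_map ends g (snd (ends k))"
      by (simp_all add: contr_ends_def)
    then show ?thesis unfolding Q_def c_def
      using comp_of_ins[OF gF, where ends=ends and x="fst (ends k)"]
            comp_of_ins[OF gF, where ends=ends and x="snd (ends k)"] by simp
  qed
  have sq: "{Q a, Q b} \<subseteq> {S. sat c S}" for a b
    unfolding Q_def c_def using comp_of_sat[where g=g and F="insert g F" and ends=ends] by auto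
  have key: "({image c (Q a), image c (Q b)} = {image c (Q a'), image c (Q b')}) \<longleftrightarrow>
        ({Q a, Q b} = {Q a', Q b'})" for a b a' b'
    unfolding pair_img by (rule img_eq_iff_sat[OF sq sq])
  have s: "h \<in> Eef E e f - insert g F \<longleftrightarrow> h \<in> Eef (E - {g}) e f - F" using hg by (auto simp: Eef_def)
  show ?thesis unfolding smoot_def s cq[THEN conjunct1] cq[THEN conjunct2] key
    unfolding Q_def by (rule refl)
qed

lemma Aset_contr:
  assumes g: "g \<in> Eef E e f" and gb: "g \<notin> \<beta>" and gc: "g \<notin> \<gamma>" and ga: "g \<notin> a"
  shows "insert g a \<in> Aset V E ends e f \<beta> \<gamma> \<longleftrightarrow>
         a \<in> Aset (contr_V V ends g) (E - {g}) (contr_ends ends g) e f \<beta> \<gamma>"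
proof -
  have ef: "e \<noteq> g" "f \<noteq> g" using g by (auto simp: Eef_def)
  have u: "\<gamma> \<union> insert g a = insert g (\<gamma> \<union> a)" by auto
  have gu: "g \<notin> \<gamma> \<union> a" using gc ga by auto
  have p: "paracel V E ends e f (\<gamma> \<union> insert g a) \<longleftrightarrow>
         paracel (contr_V V ends g) (E - {g}) (contr_ends ends g) e f (\<gamma> \<union> a)"
    unfolding u by (rule paracel_contr[OF g gu])
  have sm: "h \<in> \<beta> \<Longrightarrow> smoot V E ends e f (\<gamma> \<union> insert g a) h \<longleftrightarrow>
         smoot (contr_V V ends g) (E - {g}) (contr_ends ends g) e f (\<gamma> \<union> a) h" for h
    unfolding u using gb by (intro smoot_contr[OF gu _ ef]) auto
  have sm2: "(\<forall>h\<in>\<beta>. smoot V E ends e f (\<gamma> \<union> insert g a) h) \<longleftrightarrow>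
         (\<forall>h\<in>\<beta>. smoot (contr_V V ends g) (E - {g}) (contr_ends ends g) e f (\<gamma> \<union> a) h)"
    using sm by blast
  have s: "insert g a \<subseteq> Eef E e f \<longleftrightarrow> a \<subseteq> Eef (E - {g}) e f" using g ga by (auto simp: Eef_def)
  have d: "insert g a \<inter> \<beta> = {} \<longleftrightarrow> a \<inter> \<beta> = {}" "insert g a \<inter> \<gamma> = {} \<longleftrightarrow> a \<inter> \<gamma> = {}"
    using gb gc by auto
  show ?thesis unfolding Aset_def mem_Collect_eq s d p sm2 by (rule refl)
qed

lemma Aset_del:
  assumes gb: "g \<notin> \<beta>" and gc: "g \<notin> \<gamma>" and ga: "g \<notin> a"
  shows "a \<in> Aset V E ends e f \<beta> \<gamma> \<longleftrightarrow> a \<in> Aset V (E - {g}) ends e f \<beta> \<gamma>"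
proof -
  have s: "X \<subseteq> Eef E e f \<and> g \<notin> X \<longleftrightarrow> X \<subseteq> Eef (E - {g}) e f" for X by (auto simp: Eef_def)
  have gu: "g \<notin> \<gamma> \<union> a" using gc ga by auto
  have p: "paracel V E ends e f (\<gamma> \<union> a) \<longleftrightarrow> paracel V (E - {g}) ends e f (\<gamma> \<union> a)"
    unfolding paracel_def using s[of "\<gamma> \<union> a"] gu by simp
  have sm: "h \<in> \<beta> \<Longrightarrow> smoot V E ends e f (\<gamma> \<union> a) h \<longleftrightarrow> smoot V (E - {g}) ends e f (\<gamma> \<union> a) h" for h
  proof -
    assume "h \<in> \<beta>" then have "h \<noteq> g" using gb by auto
    then have "h \<in> Eef E e f - (\<gamma> \<union> a) \<longleftrightarrow> h \<in> Eef (E - {g}) e f - (\<gamma> \<union> a)" by (auto simp: Eef_def)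
    then show ?thesis unfolding smoot_def by simp
  qed
  have sm2: "(\<forall>h\<in>\<beta>. smoot V E ends e f (\<gamma> \<union> a) h) \<longleftrightarrow> (\<forall>h\<in>\<beta>. smoot V (E - {g}) ends e f (\<gamma> \<union> a) h)"
    using sm by blast
  have s2: "a \<subseteq> Eef E e f \<longleftrightarrow> a \<subseteq> Eef (E - {g}) e f" using s[of a] ga by simp
  show ?thesis unfolding Aset_def mem_Collect_eq s2 p sm2 by (rule refl)
qed


lemma lookup_expo: "finite F \<Longrightarrow> Poly_Mapping.lookup (expo F) h = (if h \<in> F then 1 else 0)"
  unfolding expo_def lookup_sum lookup_single when_def by simp

lemma expo_eq_iff:
  assumes "finite F1" "finite F2"
  shows "(expo F1 + expo F2 = \<mu>) \<longleftrightarrow>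
    (\<forall>h. (if h \<in> F1 then 1 else 0) + (if h \<in> F2 then 1 else 0) = Poly_Mapping.lookup \<mu> h)"
  unfolding poly_mapping_eq_iff fun_eq_iff lookup_add lookup_expo[OF assms(1)] lookup_expo[OF assms(2)]
  by auto

definition SS :: "'e set \<Rightarrow> 'e set \<Rightarrow> 'e set \<Rightarrow> 'e set set" where
  "SS E A B = {F. F \<subseteq> E \<and> A \<subseteq> F \<and> F \<inter> B = {}}"

definition Pp :: "'e set \<Rightarrow> 'e set \<Rightarrow> 'e set \<Rightarrow> 'e set \<Rightarrow> 'e set \<Rightarrow> ('e \<Rightarrow>\<^sub>0 nat) \<Rightarrow> ('e set \<times> 'e set) set" where
  "Pp E A B C D \<mu> = {p \<in> SS E A B \<times> SS E C D. expo (fst p) + expo (snd p) = \<mu>}"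

lemma finite_SS: "finite E \<Longrightarrow> finite (SS E A B)"
  unfolding SS_def by (rule finite_subset[of _ "Pow E"]) auto

lemma Tprod:
  assumes "finite E"
  shows "Poly_Mapping.lookup (Tpoly V E ends A B * Tpoly V E ends C D) \<mu> =
     (\<Sum>p\<in>Pp E A B C D \<mu>. monom 1 (ncomp V ends (fst p) + ncomp V ends (snd p)))"
proof -
  have "Tpoly V E ends A B * Tpoly V E ends C D =
     (\<Sum>F1\<in>SS E A B. \<Sum>F2\<in>SS E C D. Poly_Mapping.single (expo F1 + expo F2)
         (monom 1 (ncomp V ends F1 + ncomp V ends F2)))"
    unfolding Tpoly_def SS_def[symmetric] sum_product mult_single mult_monom by simp
  then have "Poly_Mapping.lookup (Tpoly V E ends A B * Tpoly V E ends C D) \<mu> =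
     (\<Sum>F1\<in>SS E A B. \<Sum>F2\<in>SS E C D. if expo F1 + expo F2 = \<mu> then
         monom 1 (ncomp V ends F1 + ncomp V ends F2) else 0)"
    by (simp add: lookup_sum lookup_single when_def)
  also have "\<dots> = (\<Sum>p\<in>SS E A B \<times> SS E C D. if expo (fst p) + expo (snd p) = \<mu> then
         monom 1 (ncomp V ends (fst p) + ncomp V ends (snd p)) else 0)"
    by (simp add: sum.cartesian_product split_def)
  also have "\<dots> = (\<Sum>p\<in>Pp E A B C D \<mu>. monom 1 (ncomp V ends (fst p) + ncomp V ends (snd p)))"
    unfolding Pp_def using finite_SS[OF assms]
    by (subst sum.inter_filter) auto
  finally show ?thesis .
qed

lemma Mnum_lookup:
  assumes "finite E"
  shows "Poly_Mapping.lookup (Mnum V E ends e f) \<mu> =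
     (\<Sum>p\<in>Pp E {e} {f} {f} {e} \<mu>. monom 1 (ncomp V ends (fst p) + ncomp V ends (snd p)))
   - (\<Sum>p\<in>Pp E {e,f} {} {} {e,f} \<mu>. monom 1 (ncomp V ends (fst p) + ncomp V ends (snd p)))"
  unfolding Mnum_def lookup_minus Tprod[OF assms] by (rule refl)

lemma Pp_del:
  assumes "finite E" "Poly_Mapping.lookup \<mu> g = 0"
  shows "Pp E A B C D \<mu> = Pp (E - {g}) A B C D \<mu>"
proof (intro set_eqI iffI)
  fix p assume p: "p \<in> Pp E A B C D \<mu>"
  then have fin: "finite (fst p)" "finite (snd p)" unfolding Pp_def SS_def
    by (auto intro: finite_subset[OF _ assms(1)])
  have "expo (fst p) + expo (snd p) = \<mu>" using p unfolding Pp_def by auto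
  then have "g \<notin> fst p" "g \<notin> snd p" using expo_eq_iff[OF fin, of \<mu>] assms(2)
    by (metis add_is_0 one_neq_zero)+
  then show "p \<in> Pp (E - {g}) A B C D \<mu>" using p unfolding Pp_def SS_def by auto
next
  fix p assume "p \<in> Pp (E - {g}) A B C D \<mu>"
  then show "p \<in> Pp E A B C D \<mu>" unfolding Pp_def SS_def by auto
qed

lemma Pp_contr:
  assumes fin: "finite E" and gE: "g \<in> E" and gB: "g \<notin> B" "g \<notin> D" and gA: "g \<notin> A" "g \<notin> C" and mg: "Poly_Mapping.lookup \<mu> g = 0"
  shows "Pp E A B C D (\<mu> + Poly_Mapping.single g 2) =
    (\<lambda>p. (insert g (fst p), insert g (snd p))) ` Pp (E - {g}) A B C D \<mu>"
proof (intro set_eqI iffI)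
  fix p assume p: "p \<in> Pp E A B C D (\<mu> + Poly_Mapping.single g 2)"
  obtain F1 F2 where pe: "p = (F1, F2)" by (cases p)
  have fin2: "finite F1" "finite F2" using p fin unfolding Pp_def SS_def pe
    by (auto intro: finite_subset[OF _ fin])
  have eq: "\<forall>h. (if h \<in> F1 then 1 else 0) + (if h \<in> F2 then 1 else 0) =
      Poly_Mapping.lookup (\<mu> + Poly_Mapping.single g 2) h"
    using p expo_eq_iff[OF fin2] unfolding Pp_def pe by auto
  then have "(if g \<in> F1 then 1 else 0) + (if g \<in> F2 then 1 else (0::nat)) = 2"
    using mg by (simp add: lookup_add)
  then have g12: "g \<in> F1" "g \<in> F2" by (auto split: if_splits)
  have fin3: "finite (F1 - {g})" "finite (F2 - {g})" using fin2 by auto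
  have "\<forall>h. (if h \<in> F1 - {g} then 1 else 0) + (if h \<in> F2 - {g} then 1 else 0) =
      Poly_Mapping.lookup \<mu> h"
  proof
    fix h show "(if h \<in> F1 - {g} then 1 else 0) + (if h \<in> F2 - {g} then 1 else 0) =
      Poly_Mapping.lookup \<mu> h"
      using eq[rule_format, of h] mg by (cases "h = g") (auto simp: lookup_add lookup_single)
  qed
  then have "expo (F1 - {g}) + expo (F2 - {g}) = \<mu>" using expo_eq_iff[OF fin3] by auto
  then have "(F1 - {g}, F2 - {g}) \<in> Pp (E - {g}) A B C D \<mu>"
    using p gB gA unfolding Pp_def SS_def pe by auto
  moreover have "p = (insert g (F1 - {g}), insert g (F2 - {g}))" using g12 pe by auto
  ultimately show "p \<in> (\<lambda>p. (insert g (fst p), insert g (snd p))) ` Pp (E - {g}) A B C D \<mu>"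
    by force
next
  fix p assume "p \<in> (\<lambda>p. (insert g (fst p), insert g (snd p))) ` Pp (E - {g}) A B C D \<mu>"
  then obtain X Y where p: "p = (insert g X, insert g Y)" and xy: "(X, Y) \<in> Pp (E - {g}) A B C D \<mu>"
    by auto
  have fin2: "finite X" "finite Y" using xy fin unfolding Pp_def SS_def
    by (auto intro: finite_subset[OF _ fin])
  have fin3: "finite (insert g X)" "finite (insert g Y)" using fin2 by auto
  have gxy: "g \<notin> X" "g \<notin> Y" using xy unfolding Pp_def SS_def by auto
  have eq: "\<forall>h. (if h \<in> X then 1 else 0) + (if h \<in> Y then 1 else 0) = Poly_Mapping.lookup \<mu> h"
    using xy expo_eq_iff[OF fin2] unfolding Pp_def by auto
  have "\<forall>h. (if h \<in> insert g X then 1 else 0) + (if h \<in> insert g Y then 1 else 0) =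
      Poly_Mapping.lookup (\<mu> + Poly_Mapping.single g 2) h"
  proof
    fix h show "(if h \<in> insert g X then 1 else 0) + (if h \<in> insert g Y then 1 else 0) =
      Poly_Mapping.lookup (\<mu> + Poly_Mapping.single g 2) h"
      using eq[rule_format, of h] mg gxy by (cases "h = g") (auto simp: lookup_add lookup_single)
  qed
  then have "expo (insert g X) + expo (insert g Y) = \<mu> + Poly_Mapping.single g 2"
    using expo_eq_iff[OF fin3] by auto
  then show "p \<in> Pp E A B C D (\<mu> + Poly_Mapping.single g 2)"
    using xy gE gB unfolding Pp_def SS_def p by auto
qed

lemma inj_ins2:
  "inj_on (\<lambda>p. (insert g (fst p), insert g (snd p))) (Pp (E - {g}) A B C D \<mu>)"
proof (rule inj_onI)
  fix p q assume "p \<in> Pp (E - {g}) A B C D \<mu>" "q \<in> Pp (E - {g}) A B C D \<mu>"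
    and eq: "(insert g (fst p), insert g (snd p)) = (insert g (fst q), insert g (snd q))"
  then have "g \<notin> fst p" "g \<notin> snd p" "g \<notin> fst q" "g \<notin> snd q" unfolding Pp_def SS_def by auto
  then have "fst p = fst q" "snd p = snd q" using eq by (metis Pair_inject insert_ident)+
  then show "p = q" by (simp add: prod_eq_iff)
qed


definition Prs :: "'e set \<Rightarrow> 'e \<Rightarrow> 'e \<Rightarrow> ('e set \<times> 'e set) set" where
  "Prs E e f = {(\<beta>, \<gamma>). \<beta> \<subseteq> Eef E e f \<and> \<gamma> \<subseteq> Eef E e f \<and> \<beta> \<inter> \<gamma> = {}}"

lemma finite_Prs: "finite E \<Longrightarrow> finite (Prs E e f)"
  unfolding Prs_def by (rule finite_subset[of _ "Pow E \<times> Pow E"]) (auto simp: Eef_def)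

lemma Aset_sub: "a \<in> Aset V E ends e f \<beta> \<gamma> \<Longrightarrow> a \<subseteq> Eef E e f"
  unfolding Aset_def by auto

lemma finite_Bset:
  assumes "finite E"
  shows "finite (Bset V E ends e f \<beta> \<gamma>)"
proof (rule finite_subset)
  show "Bset V E ends e f \<beta> \<gamma> \<subseteq> (\<lambda>p. expo (fst p) + expo (snd p)) ` (Pow E \<times> Pow E)"
  proof
    fix m assume "m \<in> Bset V E ends e f \<beta> \<gamma>"
    then obtain a a' where "m = expo a + expo a'" "a \<in> Aset V E ends e f \<beta> \<gamma>" "a' \<in> Aset V E ends e f \<beta> \<gamma>"
      unfolding Bset_def by blast
    moreover then have "a \<subseteq> E" "a' \<subseteq> E" using Aset_sub by (fastforce simp: Eef_def)+
    ultimately show "m \<in> (\<lambda>p. expo (fst p) + expo (snd p)) ` (Pow E \<times> Pow E)" by force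
  qed
  show "finite ((\<lambda>p. expo (fst p) + expo (snd p)) ` (Pow E \<times> Pow E))" using assms by simp
qed

lemma lookup_term:
  assumes "finite B"
  shows "Poly_Mapping.lookup (Poly_Mapping.single a 1 * Poly_Mapping.single b 1 *
     (\<Sum>m\<in>B. Poly_Mapping.single m (1::int))) lam = int (card {m\<in>B. a + b + m = lam})"
proof -
  have "Poly_Mapping.single a 1 * Poly_Mapping.single b 1 * (\<Sum>m\<in>B. Poly_Mapping.single m (1::int))
      = (\<Sum>m\<in>B. Poly_Mapping.single (a + b + m) 1)"
    by (simp add: mult_single sum_distrib_left)
  then have "Poly_Mapping.lookup (Poly_Mapping.single a 1 * Poly_Mapping.single b 1 *
     (\<Sum>m\<in>B. Poly_Mapping.single m (1::int))) lam = (\<Sum>m\<in>B. if a + b + m = lam then 1 else 0)"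
    by (auto simp: lookup_sum lookup_single when_def intro!: sum.cong)
  also have "\<dots> = (\<Sum>m\<in>{m\<in>B. a + b + m = lam}. 1)"
    by (rule sum.inter_filter[symmetric, OF assms])
  also have "\<dots> = int (card {m\<in>B. a + b + m = lam})" by simp
  finally show ?thesis .
qed

lemma Rlookup:
  assumes "finite E"
  shows "Poly_Mapping.lookup (Rpoly V E ends e f) lam =
    (\<Sum>p\<in>Prs E e f. int (card {m\<in>Bset V E ends e f (fst p) (snd p). expo (fst p) + expo (snd p) + m = lam}))"
  unfolding Rpoly_def Prs_def[symmetric] lookup_sum
  by (rule sum.cong[OF refl]) (simp add: split_def lookup_term[OF finite_Bset[OF assms]])

lemma expo_insert: "finite F \<Longrightarrow> g \<notin> F \<Longrightarrow> expo (insert g F) = expo F + Poly_Mapping.single g 1"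
  unfolding expo_def by (simp add: add.commute)

lemma Bset_elim:
  assumes "m \<in> Bset V E ends e f \<beta> \<gamma>"
  obtains a a' where "m = expo a + expo a'" "a \<in> Aset V E ends e f \<beta> \<gamma>"
    "a' \<in> Aset V E ends e f \<beta> \<gamma>" "a \<inter> a' \<in> Aset V E ends e f \<beta> \<gamma>"
  using assms unfolding Bset_def by blast

lemma Bset_intro:
  "m = expo a + expo a' \<Longrightarrow> a \<in> Aset V E ends e f \<beta> \<gamma> \<Longrightarrow>
    a' \<in> Aset V E ends e f \<beta> \<gamma> \<Longrightarrow> a \<inter> a' \<in> Aset V E ends e f \<beta> \<gamma> \<Longrightarrow> m \<in> Bset V E ends e f \<beta> \<gamma>"
  unfolding Bset_def by blast

lemma Aset_finite: "finite E \<Longrightarrow> a \<in> Aset V E ends e f \<beta> \<gamma> \<Longrightarrow> finite a"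
  using Aset_sub by (metis Diff_subset Eef_def finite_subset)

lemma Aset_disj: "a \<in> Aset V E ends e f \<beta> \<gamma> \<Longrightarrow> a \<inter> \<beta> = {} \<and> a \<inter> \<gamma> = {}"
  unfolding Aset_def by auto

lemma Bset_del:
  assumes fin: "finite E" and gb: "g \<notin> \<beta>" and gc: "g \<notin> \<gamma>" and mg: "Poly_Mapping.lookup m g = 0"
  shows "m \<in> Bset V E ends e f \<beta> \<gamma> \<longleftrightarrow> m \<in> Bset V (E - {g}) ends e f \<beta> \<gamma>"
proof
  assume "m \<in> Bset V E ends e f \<beta> \<gamma>"
  then obtain a a' where m: "m = expo a + expo a'" and A: "a \<in> Aset V E ends e f \<beta> \<gamma>"
    "a' \<in> Aset V E ends e f \<beta> \<gamma>" "a \<inter> a' \<in> Aset V E ends e f \<beta> \<gamma>" by (rule Bset_elim)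
  have fa: "finite a" "finite a'" using Aset_finite[OF fin A(1)] Aset_finite[OF fin A(2)] by simp_all
  have "Poly_Mapping.lookup m g = (if g \<in> a then 1 else 0) + (if g \<in> a' then 1 else 0)"
    unfolding m lookup_add lookup_expo[OF fa(1)] lookup_expo[OF fa(2)] by (rule refl)
  then have ga: "g \<notin> a" "g \<notin> a'" using mg by (auto split: if_splits)
  have gi: "g \<notin> a \<inter> a'" using ga by simp
  have "a \<in> Aset V (E - {g}) ends e f \<beta> \<gamma>" "a' \<in> Aset V (E - {g}) ends e f \<beta> \<gamma>"
     "a \<inter> a' \<in> Aset V (E - {g}) ends e f \<beta> \<gamma>"
    using A Aset_del[OF gb gc ga(1), where V=V and E=E and ends=ends and e=e and f=f] Aset_del[OF gb gc ga(2), where V=V and E=E and ends=ends and e=e and f=f] Aset_del[OF gb gc gi, where V=V and E=E and ends=ends and e=e and f=f] by simp_all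
  then show "m \<in> Bset V (E - {g}) ends e f \<beta> \<gamma>" by (intro Bset_intro[OF m])
next
  assume "m \<in> Bset V (E - {g}) ends e f \<beta> \<gamma>"
  then obtain a a' where m: "m = expo a + expo a'" and A: "a \<in> Aset V (E - {g}) ends e f \<beta> \<gamma>"
    "a' \<in> Aset V (E - {g}) ends e f \<beta> \<gamma>" "a \<inter> a' \<in> Aset V (E - {g}) ends e f \<beta> \<gamma>" by (rule Bset_elim)
  have ga: "g \<notin> a" "g \<notin> a'" using A(1,2)[THEN Aset_sub] by (auto simp: Eef_def)
  have gi: "g \<notin> a \<inter> a'" using ga by simp
  have "a \<in> Aset V E ends e f \<beta> \<gamma>" "a' \<in> Aset V E ends e f \<beta> \<gamma>"
     "a \<inter> a' \<in> Aset V E ends e f \<beta> \<gamma>"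
    using A Aset_del[OF gb gc ga(1), where V=V and E=E and ends=ends and e=e and f=f] Aset_del[OF gb gc ga(2), where V=V and E=E and ends=ends and e=e and f=f] Aset_del[OF gb gc gi, where V=V and E=E and ends=ends and e=e and f=f] by simp_all
  then show "m \<in> Bset V E ends e f \<beta> \<gamma>" by (intro Bset_intro[OF m])
qed


lemma single2: "Poly_Mapping.single g (2::nat) = Poly_Mapping.single g 1 + Poly_Mapping.single g 1"
proof -
  have "Poly_Mapping.single g (1 + 1) = Poly_Mapping.single g 1 + Poly_Mapping.single g (1::nat)"
    by (rule single_add)
  then show ?thesis unfolding one_add_one .
qed

lemma Bset_contr:
  assumes fin: "finite E" and g: "g \<in> Eef E e f" and gb: "g \<notin> \<beta>" and gc: "g \<notin> \<gamma>"
  shows "{m \<in> Bset V E ends e f \<beta> \<gamma>. Poly_Mapping.lookup m g = 2} =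
    (\<lambda>m'. m' + Poly_Mapping.single g 2) ` Bset (contr_V V ends g) (E - {g}) (contr_ends ends g) e f \<beta> \<gamma>"
proof (intro set_eqI iffI)
  fix m assume "m \<in> {m \<in> Bset V E ends e f \<beta> \<gamma>. Poly_Mapping.lookup m g = 2}"
  then have mB: "m \<in> Bset V E ends e f \<beta> \<gamma>" and mg: "Poly_Mapping.lookup m g = 2" by auto
  from mB obtain a a' where m: "m = expo a + expo a'" and A: "a \<in> Aset V E ends e f \<beta> \<gamma>"
    "a' \<in> Aset V E ends e f \<beta> \<gamma>" "a \<inter> a' \<in> Aset V E ends e f \<beta> \<gamma>" by (rule Bset_elim)
  have fa: "finite a" "finite a'" using Aset_finite[OF fin A(1)] Aset_finite[OF fin A(2)] by simp_all
  have "Poly_Mapping.lookup m g = (if g \<in> a then 1 else 0) + (if g \<in> a' then 1 else 0)"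
    unfolding m lookup_add lookup_expo[OF fa(1)] lookup_expo[OF fa(2)] by (rule refl)
  then have ga: "g \<in> a" "g \<in> a'" using mg by (auto split: if_splits)
  define b where "b = a - {g}"
  define b' where "b' = a' - {g}"
  have gbb: "g \<notin> b" "g \<notin> b'" "g \<notin> b \<inter> b'" unfolding b_def b'_def by auto
  have ab: "a = insert g b" "a' = insert g b'" "a \<inter> a' = insert g (b \<inter> b')"
    unfolding b_def b'_def using ga by auto
  have B: "b \<in> Aset (contr_V V ends g) (E - {g}) (contr_ends ends g) e f \<beta> \<gamma>"
     "b' \<in> Aset (contr_V V ends g) (E - {g}) (contr_ends ends g) e f \<beta> \<gamma>"
     "b \<inter> b' \<in> Aset (contr_V V ends g) (E - {g}) (contr_ends ends g) e f \<beta> \<gamma>"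
    using A unfolding ab
    using Aset_contr[OF g gb gc gbb(1), where V=V and ends=ends]
      Aset_contr[OF g gb gc gbb(2), where V=V and ends=ends]
      Aset_contr[OF g gb gc gbb(3), where V=V and ends=ends] by simp_all
  have fb: "finite b" "finite b'" using fa unfolding b_def b'_def by auto
  have "m = (expo b + expo b') + Poly_Mapping.single g 2"
    unfolding m ab(1,2) expo_insert[OF fb(1) gbb(1)] expo_insert[OF fb(2) gbb(2)] single2
    by (simp add: ac_simps)
  moreover have "expo b + expo b' \<in> Bset (contr_V V ends g) (E - {g}) (contr_ends ends g) e f \<beta> \<gamma>"
    by (rule Bset_intro[OF refl B])
  ultimately show "m \<in> (\<lambda>m'. m' + Poly_Mapping.single g 2) ` Bset (contr_V V ends g) (E - {g}) (contr_ends ends g) e f \<beta> \<gamma>"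
    by blast
next
  fix m assume "m \<in> (\<lambda>m'. m' + Poly_Mapping.single g 2) ` Bset (contr_V V ends g) (E - {g}) (contr_ends ends g) e f \<beta> \<gamma>"
  then obtain m' where mm: "m = m' + Poly_Mapping.single g 2" and
    mB: "m' \<in> Bset (contr_V V ends g) (E - {g}) (contr_ends ends g) e f \<beta> \<gamma>" by blast
  from mB obtain b b' where m': "m' = expo b + expo b'" and B: "b \<in> Aset (contr_V V ends g) (E - {g}) (contr_ends ends g) e f \<beta> \<gamma>"
     "b' \<in> Aset (contr_V V ends g) (E - {g}) (contr_ends ends g) e f \<beta> \<gamma>"
     "b \<inter> b' \<in> Aset (contr_V V ends g) (E - {g}) (contr_ends ends g) e f \<beta> \<gamma>" by (rule Bset_elim)
  have fin': "finite (E - {g})" using fin by simp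
  have fb: "finite b" "finite b'" using Aset_finite[OF fin' B(1)] Aset_finite[OF fin' B(2)] by simp_all
  have gbb: "g \<notin> b" "g \<notin> b'" using B(1,2)[THEN Aset_sub] by (auto simp: Eef_def)
  have gbb3: "g \<notin> b \<inter> b'" using gbb by simp
  have A: "insert g b \<in> Aset V E ends e f \<beta> \<gamma>" "insert g b' \<in> Aset V E ends e f \<beta> \<gamma>"
     "insert g (b \<inter> b') \<in> Aset V E ends e f \<beta> \<gamma>"
    using B Aset_contr[OF g gb gc gbb(1), where V=V and ends=ends]
      Aset_contr[OF g gb gc gbb(2), where V=V and ends=ends]
      Aset_contr[OF g gb gc gbb3, where V=V and ends=ends] by simp_all
  have i: "insert g b \<inter> insert g b' = insert g (b \<inter> b')" by auto
  have me: "m = expo (insert g b) + expo (insert g b')"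
    unfolding mm m' expo_insert[OF fb(1) gbb(1)] expo_insert[OF fb(2) gbb(2)] single2
    by (simp add: ac_simps)
  have "m \<in> Bset V E ends e f \<beta> \<gamma>"
    by (rule Bset_intro[OF me A(1,2)]) (simp add: i A(3))
  moreover have "Poly_Mapping.lookup m g = 2"
    unfolding me lookup_add lookup_expo[OF finite.insertI[OF fb(1)]] lookup_expo[OF finite.insertI[OF fb(2)]]
    by simp
  ultimately show "m \<in> {m \<in> Bset V E ends e f \<beta> \<gamma>. Poly_Mapping.lookup m g = 2}" by simp
qed


lemma Prs_elim:
  assumes "p \<in> Prs E e f"
  shows "fst p \<subseteq> Eef E e f" "snd p \<subseteq> Eef E e f" "fst p \<inter> snd p = {}"
  using assms unfolding Prs_def by auto

lemma Prs_sub: "Prs (E - {g}) e f \<subseteq> Prs E e f"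
  unfolding Prs_def Eef_def by auto

lemma Prs_out: "p \<in> Prs E e f - Prs (E - {g}) e f \<Longrightarrow> g \<in> fst p \<or> g \<in> snd p"
  unfolding Prs_def Eef_def by auto

lemma Prs_in: "p \<in> Prs (E - {g}) e f \<Longrightarrow> g \<notin> fst p \<and> g \<notin> snd p"
  unfolding Prs_def Eef_def by auto

lemma Eef_finite: "finite E \<Longrightarrow> X \<subseteq> Eef E e f \<Longrightarrow> finite X"
  unfolding Eef_def by (metis Diff_subset finite_subset)

lemma R_del:
  assumes fin: "finite E" and lg: "Poly_Mapping.lookup lam g = 0"
  shows "Poly_Mapping.lookup (Rpoly V E ends e f) lam = Poly_Mapping.lookup (Rpoly V (E - {g}) ends e f) lam"
proof -
  define N where "N E' p = int (card {m\<in>Bset V E' ends e f (fst p) (snd p). expo (fst p) + expo (snd p) + m = lam})" for E' p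
  have z: "N E p = 0" if p: "p \<in> Prs E e f - Prs (E - {g}) e f" for p
  proof -
    have fp: "finite (fst p)" "finite (snd p)" using p Prs_elim[of p E e f] Eef_finite[OF fin] by auto
    have gp: "g \<in> fst p \<or> g \<in> snd p" using Prs_out[OF p] .
    have e0: "{m\<in>Bset V E ends e f (fst p) (snd p). expo (fst p) + expo (snd p) + m = lam} = {}"
    proof (rule ccontr)
      assume "{m\<in>Bset V E ends e f (fst p) (snd p). expo (fst p) + expo (snd p) + m = lam} \<noteq> {}"
      then obtain m where "expo (fst p) + expo (snd p) + m = lam" by blast
      then have "Poly_Mapping.lookup (expo (fst p) + expo (snd p) + m) g = 0" using lg by simp
      then show False unfolding lookup_add lookup_expo[OF fp(1)] lookup_expo[OF fp(2)] using gp
        by (auto split: if_splits)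
    qed
    show ?thesis unfolding N_def e0 by simp
  qed
  have c: "N E p = N (E - {g}) p" if p: "p \<in> Prs (E - {g}) e f" for p
  proof -
    have gp: "g \<notin> fst p" "g \<notin> snd p" using Prs_in[OF p] by auto
    have "{m\<in>Bset V E ends e f (fst p) (snd p). expo (fst p) + expo (snd p) + m = lam} =
          {m\<in>Bset V (E - {g}) ends e f (fst p) (snd p). expo (fst p) + expo (snd p) + m = lam}"
    proof (rule Collect_cong)
      fix m
      have "expo (fst p) + expo (snd p) + m = lam \<Longrightarrow> Poly_Mapping.lookup m g = 0"
      proof -
        assume "expo (fst p) + expo (snd p) + m = lam"
        then have "Poly_Mapping.lookup (expo (fst p) + expo (snd p) + m) g = 0" using lg by simp
        then show "Poly_Mapping.lookup m g = 0" unfolding lookup_add by simp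
      qed
      then show "(m \<in> Bset V E ends e f (fst p) (snd p) \<and> expo (fst p) + expo (snd p) + m = lam) \<longleftrightarrow>
          (m \<in> Bset V (E - {g}) ends e f (fst p) (snd p) \<and> expo (fst p) + expo (snd p) + m = lam)"
        using Bset_del[OF fin gp, where m=m and V=V and ends=ends and e=e and f=f] by blast
    qed
    then show ?thesis unfolding N_def by simp
  qed
  have "Poly_Mapping.lookup (Rpoly V E ends e f) lam = (\<Sum>p\<in>Prs E e f. N E p)"
    unfolding Rlookup[OF fin] N_def by (rule refl)
  also have "\<dots> = (\<Sum>p\<in>Prs (E - {g}) e f. N E p)"
    by (rule sum.mono_neutral_right[OF finite_Prs[OF fin] Prs_sub]) (use z in blast)
  also have "\<dots> = (\<Sum>p\<in>Prs (E - {g}) e f. N (E - {g}) p)"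
    by (rule sum.cong[OF refl c])
  also have "\<dots> = Poly_Mapping.lookup (Rpoly V (E - {g}) ends e f) lam"
  proof -
    have "finite (E - {g})" using fin by simp
    then show ?thesis unfolding N_def by (rule Rlookup[symmetric])
  qed
  finally show ?thesis .
qed


lemma R_contr:
  assumes fin: "finite E" and g: "g \<in> Eef E e f" and lg: "Poly_Mapping.lookup lam g = 0"
  shows "Poly_Mapping.lookup (Rpoly V E ends e f) (lam + Poly_Mapping.single g 2) =
         Poly_Mapping.lookup (Rpoly (contr_V V ends g) (E - {g}) (contr_ends ends g) e f) lam"
proof -
  define s where "s = Poly_Mapping.single g (2::nat)"
  define N where "N p = int (card {m\<in>Bset V E ends e f (fst p) (snd p). expo (fst p) + expo (snd p) + m = lam + s})" for p
  define N' where "N' p = int (card {m\<in>Bset (contr_V V ends g) (E - {g}) (contr_ends ends g) e f (fst p) (snd p). expo (fst p) + expo (snd p) + m = lam})" for p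
  have z: "N p = 0" if p: "p \<in> Prs E e f - Prs (E - {g}) e f" for p
  proof -
    have fp: "finite (fst p)" "finite (snd p)" using p Prs_elim[of p E e f] Eef_finite[OF fin] by auto
    have gp: "g \<in> fst p \<or> g \<in> snd p" using Prs_out[OF p] .
    have dj: "fst p \<inter> snd p = {}" using p Prs_elim[of p E e f] by auto
    have e0: "{m\<in>Bset V E ends e f (fst p) (snd p). expo (fst p) + expo (snd p) + m = lam + s} = {}"
    proof (rule ccontr)
      assume "{m\<in>Bset V E ends e f (fst p) (snd p). expo (fst p) + expo (snd p) + m = lam + s} \<noteq> {}"
      then obtain m where mB: "m \<in> Bset V E ends e f (fst p) (snd p)" and
        meq: "expo (fst p) + expo (snd p) + m = lam + s" by blast
      from mB obtain a a' where m: "m = expo a + expo a'" and A: "a \<in> Aset V E ends e f (fst p) (snd p)"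
        "a' \<in> Aset V E ends e f (fst p) (snd p)" by (rule Bset_elim)
      have fa: "finite a" "finite a'" using Aset_finite[OF fin A(1)] Aset_finite[OF fin A(2)] by simp_all
      have ga: "g \<notin> a" "g \<notin> a'" using Aset_disj[OF A(1)] Aset_disj[OF A(2)] gp by auto
      have "Poly_Mapping.lookup (expo (fst p) + expo (snd p) + m) g = 2" using lg meq unfolding s_def
        by (simp add: lookup_add)
      then show False unfolding m lookup_add lookup_expo[OF fp(1)] lookup_expo[OF fp(2)]
          lookup_expo[OF fa(1)] lookup_expo[OF fa(2)] using gp ga dj
        by (auto split: if_splits)
    qed
    show ?thesis unfolding N_def e0 by simp
  qed
  have c: "N p = N' p" if p: "p \<in> Prs (E - {g}) e f" for p
  proof -
    have gp: "g \<notin> fst p" "g \<notin> snd p" using Prs_in[OF p] by auto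
    have fp: "finite (fst p)" "finite (snd p)" using p Prs_elim[of p "E - {g}" e f] Eef_finite[of "E - {g}"] fin by auto
    define P where "P m = (expo (fst p) + expo (snd p) + m = lam)" for m
    have P2: "(expo (fst p) + expo (snd p) + m = lam + s) \<longleftrightarrow> Poly_Mapping.lookup m g = 2 \<and> P (m - s)" for m
    proof
      assume h: "expo (fst p) + expo (snd p) + m = lam + s"
      then have "Poly_Mapping.lookup (expo (fst p) + expo (snd p) + m) g = 2" using lg unfolding s_def
        by (simp add: lookup_add)
      then have mg: "Poly_Mapping.lookup m g = 2" using gp unfolding lookup_add lookup_expo[OF fp(1)] lookup_expo[OF fp(2)]
        by simp
      have ms: "m = (m - s) + s"
      proof (rule poly_mapping_eqI)
        fix k show "Poly_Mapping.lookup m k = Poly_Mapping.lookup (m - s + s) k"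
          using mg unfolding s_def by (cases "k = g") (auto simp: lookup_add lookup_minus lookup_single)
      qed
      have "expo (fst p) + expo (snd p) + (m - s) + s = lam + s" using h ms by (metis add.assoc)
      then have "P (m - s)" unfolding P_def by simp
      then show "Poly_Mapping.lookup m g = 2 \<and> P (m - s)" using mg by simp
    next
      assume h: "Poly_Mapping.lookup m g = 2 \<and> P (m - s)"
      have ms: "m = (m - s) + s"
      proof (rule poly_mapping_eqI)
        fix k show "Poly_Mapping.lookup m k = Poly_Mapping.lookup (m - s + s) k"
          using h unfolding s_def by (cases "k = g") (auto simp: lookup_add lookup_minus lookup_single)
      qed
      show "expo (fst p) + expo (snd p) + m = lam + s" using h ms unfolding P_def by (metis add.assoc)
    qed
    have "{m\<in>Bset V E ends e f (fst p) (snd p). expo (fst p) + expo (snd p) + m = lam + s}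
      = {m \<in> {m\<in>Bset V E ends e f (fst p) (snd p). Poly_Mapping.lookup m g = 2}. P (m - s)}"
      using P2 by blast
    also have "\<dots> = {m \<in> (\<lambda>m'. m' + s) ` Bset (contr_V V ends g) (E - {g}) (contr_ends ends g) e f (fst p) (snd p). P (m - s)}"
      unfolding s_def Bset_contr[OF fin g gp] by (rule refl)
    also have "\<dots> = (\<lambda>m'. m' + s) ` {m' \<in> Bset (contr_V V ends g) (E - {g}) (contr_ends ends g) e f (fst p) (snd p). P m'}"
      by auto
    finally have eqs: "{m\<in>Bset V E ends e f (fst p) (snd p). expo (fst p) + expo (snd p) + m = lam + s}
      = (\<lambda>m'. m' + s) ` {m' \<in> Bset (contr_V V ends g) (E - {g}) (contr_ends ends g) e f (fst p) (snd p). P m'}" .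
    have inj: "inj_on (\<lambda>m'. m' + s) X" for X by (rule inj_onI) simp
    show ?thesis unfolding N_def N'_def eqs card_image[OF inj] P_def by (rule refl)
  qed
  have "Poly_Mapping.lookup (Rpoly V E ends e f) (lam + s) = (\<Sum>p\<in>Prs E e f. N p)"
    unfolding Rlookup[OF fin] N_def by (rule refl)
  also have "\<dots> = (\<Sum>p\<in>Prs (E - {g}) e f. N p)"
    by (rule sum.mono_neutral_right[OF finite_Prs[OF fin] Prs_sub]) (use z in blast)
  also have "\<dots> = (\<Sum>p\<in>Prs (E - {g}) e f. N' p)"
    by (rule sum.cong[OF refl c])
  also have "\<dots> = Poly_Mapping.lookup (Rpoly (contr_V V ends g) (E - {g}) (contr_ends ends g) e f) lam"
  proof -
    have "finite (E - {g})" using fin by simp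
    then show ?thesis unfolding N'_def by (rule Rlookup[symmetric])
  qed
  finally show ?thesis unfolding s_def .
qed

lemma Psum_contr:
  assumes fin: "finite E" and gE: "g \<in> E" and gB: "g \<notin> B" "g \<notin> D" and gA: "g \<notin> A" "g \<notin> C"
    and mg: "Poly_Mapping.lookup \<mu> g = 0"
  shows "(\<Sum>p\<in>Pp E A B C D (\<mu> + Poly_Mapping.single g 2). monom 1 (ncomp V ends (fst p) + ncomp V ends (snd p)))
    = (\<Sum>p\<in>Pp (E - {g}) A B C D \<mu>. monom 1 (ncomp (contr_V V ends g) (contr_ends ends g) (fst p)
          + ncomp (contr_V V ends g) (contr_ends ends g) (snd p)))"
  unfolding Pp_contr[OF fin gE gB gA mg] sum.reindex[OF inj_ins2]
proof (rule sum.cong[OF refl])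
  fix p assume "p \<in> Pp (E - {g}) A B C D \<mu>"
  then have "g \<notin> fst p" "g \<notin> snd p" unfolding Pp_def SS_def by auto
  then show "((\<lambda>p. monom 1 (ncomp V ends (fst p) + ncomp V ends (snd p))) \<circ>
          (\<lambda>p. (insert g (fst p), insert g (snd p)))) p =
         monom 1 (ncomp (contr_V V ends g) (contr_ends ends g) (fst p) +
                  ncomp (contr_V V ends g) (contr_ends ends g) (snd p))"
    using ncomp_ins[where g=g and X="fst p" and V=V and ends=ends]
          ncomp_ins[where g=g and X="snd p" and V=V and ends=ends] by simp
qed

lemma M_contr:
  assumes fin: "finite E" and gE: "g \<in> E" and ef: "e \<noteq> g" "f \<noteq> g"
    and mg: "Poly_Mapping.lookup \<mu> g = 0"
  shows "Poly_Mapping.lookup (Mnum V E ends e f) (\<mu> + Poly_Mapping.single g 2) =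
         Poly_Mapping.lookup (Mnum (contr_V V ends g) (E - {g}) (contr_ends ends g) e f) \<mu>"
proof -
  have fin': "finite (E - {g})" using fin by simp
  have n: "g \<notin> {e}" "g \<notin> {f}" "g \<notin> {e, f}" "g \<notin> {}" using ef by auto
  show ?thesis unfolding Mnum_lookup[OF fin] Mnum_lookup[OF fin']
    Psum_contr[OF fin gE n(2) n(1) n(1) n(2) mg] Psum_contr[OF fin gE n(4) n(3) n(3) n(4) mg]
    by (rule refl)
qed

lemma M_del:
  assumes fin: "finite E" and mg: "Poly_Mapping.lookup \<mu> g = 0"
  shows "Poly_Mapping.lookup (Mnum V E ends e f) \<mu> = Poly_Mapping.lookup (Mnum V (E - {g}) ends e f) \<mu>"
proof -
  have fin': "finite (E - {g})" using fin by simp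
  show ?thesis unfolding Mnum_lookup[OF fin] Mnum_lookup[OF fin'] Pp_del[OF fin mg] by (rule refl)
qed


theorem lemma4p2:
  fixes V :: "'v set" and E :: "'e set" and ends :: "'e \<Rightarrow> 'v \<times> 'v"
    and e f g :: 'e and lam :: "'e \<Rightarrow>\<^sub>0 nat"
  assumes "wf_graph V E ends"
    and "e \<in> E" and "f \<in> E" and "e \<noteq> f"
    and "Poly_Mapping.keys lam \<subseteq> E - {e, f}" and "\<forall>h. Poly_Mapping.lookup lam h \<le> 2"
    and "g \<in> E - {e, f}"
  shows "(Poly_Mapping.lookup lam g = 0 \<and> eq_holds V (del_edges E g) ends e f lam
            \<longrightarrow> eq_holds V E ends e f lam)
       \<and> (Poly_Mapping.lookup lam g = 2 \<and>
            eq_holds (contr_V V ends g) (del_edges E g) (contr_ends ends g) e f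
              (Poly_Mapping.update g 0 lam)
            \<longrightarrow> eq_holds V E ends e f lam)"
proof -
  have fin: "finite E" using assms(1) unfolding wf_graph_def by simp
  have gE: "g \<in> E" and ef: "e \<noteq> g" "f \<noteq> g" using assms(7) by auto
  have gEef: "g \<in> Eef E e f" using assms(7) by (simp add: Eef_def)
  define sef where "sef = Poly_Mapping.single e (1::nat) + Poly_Mapping.single f 1"
  have sefg: "Poly_Mapping.lookup sef g = 0" unfolding sef_def using ef
    by (simp add: lookup_add lookup_single)
  have part1: "eq_holds V E ends e f lam"
    if l0: "Poly_Mapping.lookup lam g = 0" and h: "eq_holds V (del_edges E g) ends e f lam"
  proof -
    have mg: "Poly_Mapping.lookup (lam + sef) g = 0" using l0 sefg by (simp add: lookup_add)
    have c: "coeff_M1 V E ends e f lam = coeff_M1 V (E - {g}) ends e f lam"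
      unfolding coeff_M1_def add.assoc sef_def[symmetric] M_del[OF fin mg] by (rule refl)
    have r: "Poly_Mapping.lookup (Rpoly V E ends e f) lam = Poly_Mapping.lookup (Rpoly V (E - {g}) ends e f) lam"
      by (rule R_del[OF fin l0])
    show ?thesis using h unfolding eq_holds_def del_edges_def c r .
  qed
  have part2: "eq_holds V E ends e f lam"
    if l2: "Poly_Mapping.lookup lam g = 2" and
       h: "eq_holds (contr_V V ends g) (del_edges E g) (contr_ends ends g) e f (Poly_Mapping.update g 0 lam)"
  proof -
    define lam' where "lam' = Poly_Mapping.update g 0 lam"
    have l': "Poly_Mapping.lookup lam' g = 0" unfolding lam'_def by (simp add: lookup_update)
    have ll: "lam = lam' + Poly_Mapping.single g 2"
    proof (rule poly_mapping_eqI)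
      fix k show "Poly_Mapping.lookup lam k = Poly_Mapping.lookup (lam' + Poly_Mapping.single g 2) k"
        unfolding lam'_def using l2 by (cases "k = g") (auto simp: lookup_add lookup_update lookup_single)
    qed
    have mg: "Poly_Mapping.lookup (lam' + sef) g = 0" using l' sefg by (simp add: lookup_add)
    have mu: "lam + Poly_Mapping.single e 1 + Poly_Mapping.single f 1 = (lam' + sef) + Poly_Mapping.single g 2"
      unfolding ll sef_def by (simp add: ac_simps)
    have c: "coeff_M1 V E ends e f lam = coeff_M1 (contr_V V ends g) (E - {g}) (contr_ends ends g) e f lam'"
      unfolding coeff_M1_def mu M_contr[OF fin gE ef mg] unfolding sef_def add.assoc by (rule refl)
    have r: "Poly_Mapping.lookup (Rpoly V E ends e f) lam =
        Poly_Mapping.lookup (Rpoly (contr_V V ends g) (E - {g}) (contr_ends ends g) e f) lam'"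
      unfolding ll by (rule R_contr[OF fin gEef l'])
    show ?thesis using h unfolding eq_holds_def del_edges_def c r lam'_def[symmetric] .
  qed
  show ?thesis using part1 part2 by blast
qed

end
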